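(* Let $G=(V,E)$ be a finite, connected, simple graph with at least two vertices and generic weights $(w_x)_{x\in\Sigma}$, $\Sigma=V\cup E$; let $M$ be the ground state and let $S\subset\Sigma$ be such that no element of $S$ belongs to $M$. Consider new weights $w'_y\ge w_y$ for $y\in S$ and $w'_y=w_y$ for $y\notin S$. Then the ground state for the new weights is still $M$, and for every $x\in\Sigma$ the flexibility $F_G(x)$ computed with the new weights is at least the flexibility $F_G(x)$ computed with the old weights.
   Context: A matching of $G$ is a set $M\subset\Sigma$ such that every vertex either belongs to $M$ or is an endpoint of exactly one edge of $M$, but not both. $H(M)=\sum_{z\in M}w_z$; the ground state is the matching minimising $H$. Weights are generic if no nontrivial integer combination of finitely many weights vanishes. For $x\in\Sigma$, $M_{G,x,1}$ (resp. $M_{G,x,0}$) is the minimal-weight matching among those containing $x$ (resp. not containing $x$); $K_{G,x}=H(M_{G,x,0})-H(M_{G,x,1})+w_x$ and the flexibility is $F_G(x)=|K_{G,x}-w_x|$, all relative to the given weights. *)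

theory Defs
  imports Complex_Main
begin

text \<open>Elements of Sigma = V \<union> E: vertices and edges (edges are 2-element vertex sets).\<close>
datatype 'v elem = Vtx 'v | Edg "'v set"

definition simple_graph :: "'v set \<Rightarrow> 'v set set \<Rightarrow> bool" where
  "simple_graph V E \<longleftrightarrow> finite V \<and>
     (\<forall>e\<in>E. \<exists>u v. e = {u, v} \<and> u \<noteq> v \<and> u \<in> V \<and> v \<in> V)"

definition connected_graph :: "'v set \<Rightarrow> 'v set set \<Rightarrow> bool" where
  "connected_graph V E \<longleftrightarrow>
     (\<forall>u\<in>V. \<forall>v\<in>V. (u, v) \<in> {(a, b). {a, b} \<in> E}\<^sup>*)"

definition elems :: "'v set \<Rightarrow> 'v set set \<Rightarrow> 'v elem set" where
  "elems V E = Vtx ` V \<union> Edg ` E"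

text \<open>A matching (monomer-dimer configuration): every vertex is covered exactly once,
  either by itself (as a monomer in M) or by exactly one edge of M.\<close>
definition matching :: "'v set \<Rightarrow> 'v set set \<Rightarrow> 'v elem set \<Rightarrow> bool" where
  "matching V E M \<longleftrightarrow> M \<subseteq> elems V E \<and>
     (\<forall>v\<in>V. (if Vtx v \<in> M then 1 else 0) + card {e. Edg e \<in> M \<and> v \<in> e} = (1::nat))"

definition H :: "('v elem \<Rightarrow> real) \<Rightarrow> 'v elem set \<Rightarrow> real" where
  "H w M = (\<Sum>z\<in>M. w z)"

definition generic :: "'v elem set \<Rightarrow> ('v elem \<Rightarrow> real) \<Rightarrow> bool" where
  "generic S w \<longleftrightarrow> (\<forall>c :: 'v elem \<Rightarrow> int. (\<exists>x\<in>S. c x \<noteq> 0) \<longrightarrow>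
      (\<Sum>x\<in>S. of_int (c x) * w x) \<noteq> 0)"

definition ground_state :: "'v set \<Rightarrow> 'v set set \<Rightarrow> ('v elem \<Rightarrow> real) \<Rightarrow> 'v elem set \<Rightarrow> bool" where
  "ground_state V E w M \<longleftrightarrow> matching V E M \<and>
     (\<forall>N. matching V E N \<and> N \<noteq> M \<longrightarrow> H w M < H w N)"

definition H1 :: "'v set \<Rightarrow> 'v set set \<Rightarrow> ('v elem \<Rightarrow> real) \<Rightarrow> 'v elem \<Rightarrow> real" where
  "H1 V E w x = Min {H w N | N. matching V E N \<and> x \<in> N}"

definition H0 :: "'v set \<Rightarrow> 'v set set \<Rightarrow> ('v elem \<Rightarrow> real) \<Rightarrow> 'v elem \<Rightarrow> real" where
  "H0 V E w x = Min {H w N | N. matching V E N \<and> x \<notin> N}"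

definition K :: "'v set \<Rightarrow> 'v set set \<Rightarrow> ('v elem \<Rightarrow> real) \<Rightarrow> 'v elem \<Rightarrow> real" where
  "K V E w x = H0 V E w x - H1 V E w x + w x"

definition flex :: "'v set \<Rightarrow> 'v set set \<Rightarrow> ('v elem \<Rightarrow> real) \<Rightarrow> 'v elem \<Rightarrow> real" where
  "flex V E w x = \<bar>K V E w x - w x\<bar>"

end

theory Submission
  imports Defs
begin

lemma fin_img: "finite {N. Q N} \<Longrightarrow> finite {H w N | N. Q N}"
proof -
  assume "finite {N. Q N}"
  moreover have "{H w N | N. Q N} = (H w) ` {N. Q N}" by auto
  ultimately show ?thesis by simp
qed

lemma min_mono:
  assumes fin: "finite {N. Q N}" and mono: "\<forall>N. Q N \<longrightarrow> H w N \<le> H w' N"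
  shows "Min {H w N | N. Q N} \<le> Min {H w' N | N. Q N}"
proof (cases "\<exists>N. Q N")
  case False
  then show ?thesis by simp
next
  case True
  have fA: "finite {H w N | N. Q N}" and fB: "finite {H w' N | N. Q N}"
    using fin fin_img by blast+
  have "{H w' N | N. Q N} \<noteq> {}" using True by auto
  then have "Min {H w' N | N. Q N} \<in> {H w' N | N. Q N}" using fB Min_in by blast
  then obtain N0 where N0: "Q N0" "Min {H w' N | N. Q N} = H w' N0" by auto
  have "Min {H w N | N. Q N} \<le> H w N0" using fA N0(1) by (intro Min_le) auto
  also have "\<dots> \<le> H w' N0" using mono N0(1) by auto
  finally show ?thesis using N0 by simp
qed

lemma min_eq:
  assumes fin: "finite {N. Q N}" and "Q M" and "\<forall>N. Q N \<longrightarrow> H w M \<le> H w N"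
  shows "Min {H w N | N. Q N} = H w M"
proof -
  have fA: "finite {H w N | N. Q N}" using fin fin_img by blast
  show ?thesis
    using assms fA by (intro Min_eqI) auto
qed

theorem lemma2p13:
  fixes V :: "'v set" and E :: "'v set set"
    and w w' :: "'v elem \<Rightarrow> real" and M S :: "'v elem set"
  assumes "simple_graph V E" and "connected_graph V E" and "card V \<ge> 2"
    and "generic (elems V E) w"
    and "ground_state V E w M"
    and "S \<subseteq> elems V E" and "S \<inter> M = {}"
    and "\<forall>y\<in>S. w' y \<ge> w y"
    and "\<forall>y\<in>elems V E - S. w' y = w y"
  shows "ground_state V E w' M \<and> (\<forall>x\<in>elems V E. flex V E w' x \<ge> flex V E w x)"
proof -
  have fV: "finite V" using assms(1) unfolding simple_graph_def by auto
  have "E \<subseteq> Pow V" using assms(1) unfolding simple_graph_def by auto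
  then have fE: "finite E" using fV by (meson finite_Pow_iff finite_subset)
  have fel: "finite (elems V E)" using fV fE unfolding elems_def by auto
  have finM: "finite {N. matching V E N \<and> P N}" for P
  proof -
    have "{N. matching V E N \<and> P N} \<subseteq> Pow (elems V E)" unfolding matching_def by auto
    then show ?thesis using fel by (meson finite_Pow_iff finite_subset)
  qed
  have mM: "matching V E M" using assms(5) unfolding ground_state_def by auto
  have Mle: "H w M \<le> H w N" if "matching V E N" for N
    using assms(5) that unfolding ground_state_def by (cases "N = M") auto
  have le: "H w N \<le> H w' N" if "matching V E N" for N
  proof -
    have "N \<subseteq> elems V E" using that unfolding matching_def by auto
    then have "\<forall>z\<in>N. w z \<le> w' z" using assms(8,9) by fastforce
    then show ?thesis unfolding H_def by (simp add: sum_mono)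
  qed
  have eqM: "H w' M = H w M"
  proof -
    have "M \<subseteq> elems V E" using mM unfolding matching_def by auto
    then have "\<forall>z\<in>M. w' z = w z" using assms(7,9) by blast
    then show ?thesis unfolding H_def by simp
  qed
  have gs: "ground_state V E w' M"
    unfolding ground_state_def
  proof (intro conjI allI impI)
    fix N assume N: "matching V E N \<and> N \<noteq> M"
    have "H w M < H w N" using assms(5) N unfolding ground_state_def by auto
    also have "\<dots> \<le> H w' N" using le N by auto
    finally show "H w' M < H w' N" using eqM by simp
  qed (rule mM)
  have Mle': "H w' M \<le> H w' N" if "matching V E N" for N
    using gs that unfolding ground_state_def by (cases "N = M") auto
  have flexeq: "flex V E w x = \<bar>H0 V E w x - H1 V E w x\<bar>" for w x
    unfolding flex_def K_def by simp
  have mins: "H w M \<le> Min {H w N | N. matching V E N \<and> P N}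
      \<and> Min {H w N | N. matching V E N \<and> P N} \<le> Min {H w' N | N. matching V E N \<and> P N}
    \<or> Min {H w N | N. matching V E N \<and> P N} = Min {H w' N | N. matching V E N \<and> P N}" for P
  proof (cases "\<exists>N. matching V E N \<and> P N")
    case True
    have fA: "finite {H w N | N. matching V E N \<and> P N}"
      using finM fin_img by blast
    have "{H w N | N. matching V E N \<and> P N} \<noteq> {}" using True by auto
    then have "H w M \<le> Min {H w N | N. matching V E N \<and> P N}"
      using fA Mle by (subst Min_ge_iff) auto
    moreover have "Min {H w N | N. matching V E N \<and> P N} \<le> Min {H w' N | N. matching V E N \<and> P N}"
      using finM[of P] le by (intro min_mono) auto
    ultimately show ?thesis by blast
  next
    case False
    then have "{H w N | N. matching V E N \<and> P N} = {}" "{H w' N | N. matching V E N \<and> P N} = {}"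
      by auto
    then have "Min {H w N | N. matching V E N \<and> P N} = Min {H w' N | N. matching V E N \<and> P N}"
      by (simp only:)
    then show ?thesis by blast
  qed
  have "flex V E w' x \<ge> flex V E w x" for x
  proof (cases "x \<in> M")
    case True
    have a: "H1 V E w x = H w M" unfolding H1_def
      using finM[of "\<lambda>N. x \<in> N"] True mM Mle by (intro min_eq) auto
    have b: "H1 V E w' x = H w M" unfolding H1_def
      using finM[of "\<lambda>N. x \<in> N"] True mM Mle' eqM by (subst min_eq) auto
    show ?thesis unfolding flexeq a b using mins[of "\<lambda>N. x \<notin> N"] unfolding H0_def by auto
  next
    case False
    have a: "H0 V E w x = H w M" unfolding H0_def
      using finM[of "\<lambda>N. x \<notin> N"] False mM Mle by (intro min_eq) auto
    have b: "H0 V E w' x = H w M" unfolding H0_def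
      using finM[of "\<lambda>N. x \<notin> N"] False mM Mle' eqM by (subst min_eq) auto
    show ?thesis unfolding flexeq a b using mins[of "\<lambda>N. x \<in> N"] unfolding H1_def by auto
  qed
  then show ?thesis using gs by auto
qed

end
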